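(* Let $K$ be a compact Hausdorff space. Then $n_L(C(K))=1$, in both the real and the complex case.
   Context: $C(K)$ is the Banach space of continuous scalar-valued functions on $K$ with the supremum norm. For a Banach space $X$: $\mathrm{Lip}_0(X)$ is the set of Lipschitz maps $T:X\to X$ with $T(0)=0$, with $\|T\|_L=\sup\{\|Tx-Ty\|/\|x-y\|: x\neq y\}$; $D(x)=\{x^*\in X^*: x^*(x)=\|x^*\|\|x\|=\|x\|^2\}$; $\omega(T)=\sup\{|f(Tx-Ty)|/\|x-y\|^2: x\neq y,\ f\in D(x-y)\}$; $n_L(X)=\inf\{\omega(T): T\in\mathrm{Lip}_0(X),\ \|T\|_L=1\}$. *)

theory Defs
  imports "HOL-Analysis.Analysis"
begin

text \<open>K is a type 'a (with its topology), the scalars form a type 'k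
(instantiated with real and complex).\<close>

definition CK :: "('a::topological_space \<Rightarrow> 'k::real_normed_field) set" where
  "CK = {f. continuous_on UNIV f}"

definition supnorm :: "('a \<Rightarrow> 'k::real_normed_field) \<Rightarrow> real" where
  "supnorm f = (SUP t. norm (f t))"

text \<open>Dual space: 'k-linear bounded functionals on C(K) (only their values on C(K) matter).\<close>

definition dualCK :: "(('a::topological_space \<Rightarrow> 'k::real_normed_field) \<Rightarrow> 'k) set" where
  "dualCK = {\<phi>. (\<forall>f\<in>CK. \<forall>g\<in>CK. \<phi> (\<lambda>t. f t + g t) = \<phi> f + \<phi> g)
              \<and> (\<forall>f\<in>CK. \<forall>c. \<phi> (\<lambda>t. c * f t) = c * \<phi> f)
              \<and> (\<exists>B. \<forall>f\<in>CK. norm (\<phi> f) \<le> B * supnorm f)}"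

definition dualnorm :: "(('a::topological_space \<Rightarrow> 'k::real_normed_field) \<Rightarrow> 'k) \<Rightarrow> real" where
  "dualnorm \<phi> = (SUP f\<in>{f\<in>CK. supnorm f \<le> 1}. norm (\<phi> f))"

definition Dset :: "('a::topological_space \<Rightarrow> 'k::real_normed_field) \<Rightarrow> (('a \<Rightarrow> 'k) \<Rightarrow> 'k) set" where
  "Dset x = {\<phi>\<in>dualCK. \<phi> x = of_real (dualnorm \<phi> * supnorm x)
                        \<and> dualnorm \<phi> * supnorm x = (supnorm x)\<^sup>2}"

definition Lip0 :: "(('a::topological_space \<Rightarrow> 'k::real_normed_field) \<Rightarrow> ('a \<Rightarrow> 'k)) set" where
  "Lip0 = {T. (\<forall>x\<in>CK. T x \<in> CK) \<and> T (\<lambda>t. 0) = (\<lambda>t. 0)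
            \<and> (\<exists>L. \<forall>x\<in>CK. \<forall>y\<in>CK. supnorm (\<lambda>t. T x t - T y t) \<le> L * supnorm (\<lambda>t. x t - y t))}"

definition lipnorm :: "(('a::topological_space \<Rightarrow> 'k::real_normed_field) \<Rightarrow> ('a \<Rightarrow> 'k)) \<Rightarrow> real" where
  "lipnorm T = (SUP (x, y)\<in>{(x, y). x \<in> CK \<and> y \<in> CK \<and> x \<noteq> y}.
                  supnorm (\<lambda>t. T x t - T y t) / supnorm (\<lambda>t. x t - y t))"

definition omegaL :: "(('a::topological_space \<Rightarrow> 'k::real_normed_field) \<Rightarrow> ('a \<Rightarrow> 'k)) \<Rightarrow> real" where
  "omegaL T = (SUP (x, y, \<phi>)\<in>{(x, y, \<phi>). x \<in> CK \<and> y \<in> CK \<and> x \<noteq> y \<and> \<phi> \<in> Dset (\<lambda>t. x t - y t)}.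
                  norm (\<phi> (\<lambda>t. T x t - T y t)) / (supnorm (\<lambda>t. x t - y t))\<^sup>2)"

text \<open>The Lipschitz numerical index n_L(C(K)); the type argument selects K and the scalars.\<close>

definition nL :: "('a::topological_space \<Rightarrow> 'k::real_normed_field) itself \<Rightarrow> real" where
  "nL _ = Inf {omegaL T | T :: ('a \<Rightarrow> 'k) \<Rightarrow> ('a \<Rightarrow> 'k). T \<in> Lip0 \<and> lipnorm T = 1}"

end

theory Submission
  imports Defs
begin


lemma CK_bdd:
  assumes K: "compact (UNIV::'a::topological_space set)" and f: "(f::'a\<Rightarrow>'k::real_normed_field) \<in> CK"
  shows "bdd_above (range (\<lambda>t. norm (f t)))"
proof -
  have "compact (f ` UNIV)" using compact_continuous_image f K unfolding CK_def by blast
  then obtain B where "\<forall>z\<in>f ` UNIV. norm z \<le> B" using compact_imp_bounded bounded_iff by metis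
  then show ?thesis by (auto intro!: bdd_aboveI2)
qed

lemma sup_ge:
  assumes K: "compact (UNIV::'a::topological_space set)" and f: "(f::'a\<Rightarrow>'k::real_normed_field) \<in> CK"
  shows "norm (f t) \<le> supnorm f"
  unfolding supnorm_def by (rule cSUP_upper[OF _ CK_bdd[OF K f]]) simp

lemma sup_le:
  assumes "\<And>t. norm ((f::'a\<Rightarrow>'k::real_normed_field) t) \<le> c"
  shows "supnorm f \<le> c"
  unfolding supnorm_def by (rule cSUP_least) (auto intro: assms)

lemma sup_nonneg:
  assumes K: "compact (UNIV::'a::topological_space set)" and f: "(f::'a\<Rightarrow>'k::real_normed_field) \<in> CK"
  shows "0 \<le> supnorm f"
  using sup_ge[OF K f] norm_ge_zero order_trans by blast

lemma sup_const: "supnorm (\<lambda>t::'a. c::'k::real_normed_field) = norm c"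
  unfolding supnorm_def by simp

lemma CK_diff: "f \<in> CK \<Longrightarrow> g \<in> CK \<Longrightarrow> (\<lambda>t. f t - g t) \<in> CK"
  unfolding CK_def by (auto intro!: continuous_intros)

lemma CK_add: "f \<in> CK \<Longrightarrow> g \<in> CK \<Longrightarrow> (\<lambda>t. f t + g t) \<in> CK"
  unfolding CK_def by (auto intro!: continuous_intros)

lemma CK_scale: "f \<in> CK \<Longrightarrow> (\<lambda>t. c * f t) \<in> CK"
  unfolding CK_def mem_Collect_eq by (rule continuous_on_mult[OF continuous_on_const])

lemma CK_const: "(\<lambda>t. c) \<in> CK"
  unfolding CK_def by (auto intro!: continuous_intros)

lemma sup_zero:
  assumes K: "compact (UNIV::'a::topological_space set)" and f: "(f::'a\<Rightarrow>'k::real_normed_field) \<in> CK"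
    and "supnorm f = 0" shows "f t = 0"
  using sup_ge[OF K f, of t] assms(3) by simp

lemma sup_pos:
  assumes K: "compact (UNIV::'a::topological_space set)" and "(x::'a\<Rightarrow>'k::real_normed_field) \<in> CK" "y \<in> CK" "x \<noteq> y"
  shows "0 < supnorm (\<lambda>t. x t - y t)"
proof -
  have d: "(\<lambda>t. x t - y t) \<in> CK" using assms CK_diff by blast
  obtain t where "x t \<noteq> y t" using assms(4) by auto
  then have "0 < norm (x t - y t)" by simp
  also have "\<dots> \<le> supnorm (\<lambda>t. x t - y t)" using sup_ge[OF K d] .
  finally show ?thesis .
qed



lemma lip_bdd:
  assumes K: "compact (UNIV::'a::topological_space set)" and T: "(T::('a\<Rightarrow>'k::real_normed_field)\<Rightarrow>('a\<Rightarrow>'k)) \<in> Lip0"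
  shows "bdd_above ((\<lambda>(x, y). supnorm (\<lambda>t. T x t - T y t) / supnorm (\<lambda>t. x t - y t)) ` {(x, y). x \<in> CK \<and> y \<in> CK \<and> x \<noteq> y})"
proof -
  obtain L where L: "\<forall>x\<in>CK. \<forall>y\<in>CK. supnorm (\<lambda>t. T x t - T y t) \<le> L * supnorm (\<lambda>t. x t - y t)"
    using T unfolding Lip0_def by blast
  show ?thesis
  proof (rule bdd_aboveI2)
    fix p assume "p \<in> {(x::'a\<Rightarrow>'k, y). x \<in> CK \<and> y \<in> CK \<and> x \<noteq> y}"
    then obtain x y where p: "p = (x,y)" "x \<in> CK" "y \<in> CK" "x \<noteq> y" by auto
    have pos: "0 < supnorm (\<lambda>t. x t - y t)" using sup_pos[OF K p(2,3,4)] .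
    have "supnorm (\<lambda>t. T x t - T y t) \<le> L * supnorm (\<lambda>t. x t - y t)" using L p by auto
    then show "(case p of (x, y) \<Rightarrow> supnorm (\<lambda>t. T x t - T y t) / supnorm (\<lambda>t. x t - y t)) \<le> L"
      using pos p(1) by (simp add: divide_le_eq)
  qed
qed

lemma lip_le:
  assumes K: "compact (UNIV::'a::topological_space set)" and T: "(T::('a\<Rightarrow>'k::real_normed_field)\<Rightarrow>('a\<Rightarrow>'k)) \<in> Lip0"
    and u: "u \<in> CK" and v: "v \<in> CK"
  shows "supnorm (\<lambda>t. T u t - T v t) \<le> lipnorm T * supnorm (\<lambda>t. u t - v t)"
proof (cases "u = v")
  case True
  have z: "supnorm (\<lambda>t::'a. 0::'k) = 0" using sup_const[where c="0::'k"] by simp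
  show ?thesis using True z by simp
next
  case False
  have pos: "0 < supnorm (\<lambda>t. u t - v t)" using sup_pos[OF K u v False] .
  have "supnorm (\<lambda>t. T u t - T v t) / supnorm (\<lambda>t. u t - v t) \<le> lipnorm T"
    unfolding lipnorm_def
    by (rule cSUP_upper[OF _ lip_bdd[OF K T], of "(u,v)", simplified]) (use u v False in auto)
  then show ?thesis using pos by (simp add: divide_le_eq mult.commute)
qed

lemma dual_bdd:
  assumes K: "compact (UNIV::'a::topological_space set)" and phi: "(\<phi>::('a\<Rightarrow>'k::real_normed_field)\<Rightarrow>'k) \<in> dualCK"
  shows "bdd_above ((\<lambda>f. norm (\<phi> f)) ` {f::'a\<Rightarrow>'k\<in>CK. supnorm f \<le> 1})"
proof -
  obtain B where B: "\<forall>f\<in>CK. norm (\<phi> f) \<le> B * supnorm f" using phi unfolding dualCK_def by blast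
  show ?thesis
  proof (rule bdd_aboveI2)
    fix f :: "'a\<Rightarrow>'k" assume f: "f \<in> {f\<in>CK. supnorm f \<le> 1}"
    have "norm (\<phi> f) \<le> B * supnorm f" using B f by auto
    also have "\<dots> \<le> \<bar>B\<bar> * supnorm f" using sup_nonneg[OF K, of f] f by (simp add: mult_right_mono)
    also have "\<dots> \<le> \<bar>B\<bar> * 1" using f by (intro mult_left_mono) auto
    also have "\<dots> = \<bar>B\<bar>" by simp
    finally show "norm (\<phi> f) \<le> \<bar>B\<bar>" .
  qed
qed

lemma dual_le:
  assumes K: "compact (UNIV::'a::topological_space set)" and phi: "(\<phi>::('a\<Rightarrow>'k::real_normed_field)\<Rightarrow>'k) \<in> dualCK"
    and f: "f \<in> CK"
  shows "norm (\<phi> f) \<le> dualnorm \<phi> * supnorm f"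
proof (cases "supnorm f = 0")
  case True
  have hom: "\<forall>f\<in>CK. \<forall>c. \<phi> (\<lambda>t. c * f t) = c * \<phi> f" using phi unfolding dualCK_def by blast
  have "f = (\<lambda>t. 0 * f t)" using sup_zero[OF K f True] by auto
  then have "\<phi> f = 0 * \<phi> f" using hom f by metis
  then show ?thesis using True by simp
next
  case False
  define c where "c = supnorm f"
  have cpos: "0 < c" using False sup_nonneg[OF K f] c_def by linarith
  define g where "g = (\<lambda>t. of_real (1/c) * f t)"
  have gCK: "g \<in> CK" using f unfolding g_def by (rule CK_scale)
  have "supnorm g \<le> 1"
  proof (rule sup_le)
    fix t
    have "norm (f t) \<le> c" using sup_ge[OF K f] c_def by simp
    then show "norm (g t) \<le> 1" using cpos by (simp add: g_def norm_mult norm_divide divide_le_eq)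
  qed
  then have "norm (\<phi> g) \<le> dualnorm \<phi>" unfolding dualnorm_def
    using gCK by (intro cSUP_upper[OF _ dual_bdd[OF K phi]]) auto
  moreover have "\<phi> g = of_real (1/c) * \<phi> f"
  proof -
    have hom: "\<forall>f\<in>CK. \<forall>c. \<phi> (\<lambda>t. c * f t) = c * \<phi> f" using phi unfolding dualCK_def by blast
    then show ?thesis using f unfolding g_def by blast
  qed
  ultimately have "norm (\<phi> f) / c \<le> dualnorm \<phi>" using cpos by (simp add: norm_mult norm_divide)
  then show ?thesis using cpos c_def by (simp add: divide_le_eq mult.commute)
qed



lemma omega_elem_le:
  assumes K: "compact (UNIV::'a::topological_space set)"
    and T: "(T::('a\<Rightarrow>'k::real_normed_field)\<Rightarrow>('a\<Rightarrow>'k)) \<in> Lip0" and T1: "lipnorm T = 1"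
    and x: "x \<in> CK" and y: "y \<in> CK" and xy: "x \<noteq> y" and phi: "\<phi> \<in> Dset (\<lambda>t. x t - y t)"
  shows "norm (\<phi> (\<lambda>t. T x t - T y t)) / (supnorm (\<lambda>t. x t - y t))\<^sup>2 \<le> 1"
proof -
  define N where "N = supnorm (\<lambda>t. x t - y t)"
  have Npos: "0 < N" using sup_pos[OF K x y xy] N_def by simp
  have pd: "\<phi> \<in> dualCK" and e: "dualnorm \<phi> * N = N\<^sup>2" using phi unfolding Dset_def N_def by auto
  have dn: "dualnorm \<phi> = N" using e Npos by (simp add: power2_eq_square)
  have TCK: "T x \<in> CK" "T y \<in> CK" using T x y unfolding Lip0_def by auto
  have "norm (\<phi> (\<lambda>t. T x t - T y t)) \<le> N * supnorm (\<lambda>t. T x t - T y t)"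
    using dual_le[OF K pd CK_diff[OF TCK]] dn by simp
  also have "\<dots> \<le> N * N" using lip_le[OF K T x y] T1 Npos N_def by simp
  finally show ?thesis using Npos N_def by (simp add: power2_eq_square divide_le_eq)
qed

lemma omega_bdd:
  assumes K: "compact (UNIV::'a::topological_space set)"
    and T: "(T::('a\<Rightarrow>'k::real_normed_field)\<Rightarrow>('a\<Rightarrow>'k)) \<in> Lip0" and T1: "lipnorm T = 1"
  shows "bdd_above ((\<lambda>(x, y, \<phi>). norm (\<phi> (\<lambda>t. T x t - T y t)) / (supnorm (\<lambda>t. x t - y t))\<^sup>2) `
     {(x, y, \<phi>). x \<in> CK \<and> y \<in> CK \<and> x \<noteq> y \<and> \<phi> \<in> Dset (\<lambda>t. x t - y t)})"
  by (rule bdd_aboveI2[where M=1]) (auto intro: omega_elem_le[OF K T T1])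

lemma point_Dset:
  assumes K: "compact (UNIV::'a::topological_space set)"
    and D: "(D::'a\<Rightarrow>'k::real_normed_field) \<in> CK" and Ds: "norm (D s) = supnorm D" and pos: "0 < supnorm D"
  shows "(\<lambda>f. (of_real ((supnorm D)\<^sup>2) / D s) * f s) \<in> Dset D"
proof -
  define N where "N = supnorm D"
  define c where "c = (of_real (N\<^sup>2) / D s :: 'k)"
  have Dsnz: "D s \<noteq> 0" using Ds pos by auto
  have nc: "norm c = N" unfolding c_def using Ds pos N_def by (simp add: norm_divide norm_mult power2_eq_square)
  have dual: "(\<lambda>f. c * f s) \<in> dualCK"
    unfolding dualCK_def
  proof (intro CollectI conjI ballI allI)
    show "\<exists>B. \<forall>f\<in>CK. norm (c * f s) \<le> B * supnorm f"
      by (rule exI[of _ N]) (auto simp: norm_mult nc intro!: mult_left_mono sup_ge[OF K] simp: N_def pos less_imp_le)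
  qed (auto simp: algebra_simps)
  have dn: "dualnorm (\<lambda>f. c * f s) = N"
    unfolding dualnorm_def
  proof (rule antisym)
    show "(SUP f\<in>{f\<in>CK. supnorm f \<le> 1}. norm (c * f s)) \<le> N"
    proof (rule cSUP_least)
      show "{f::'a\<Rightarrow>'k \<in> CK. supnorm f \<le> 1} \<noteq> {}"
      proof -
        have a1: "(\<lambda>t::'a. 0::'k) \<in> CK" by (rule CK_const)
        have a2: "supnorm (\<lambda>t::'a. 0::'k) = 0" using sup_const[where c="0::'k"] by simp
        have "(\<lambda>t::'a. 0::'k) \<in> {f \<in> CK. supnorm f \<le> 1}" using a1 a2 by simp
        then show ?thesis by blast
      qed
      fix f :: "'a\<Rightarrow>'k" assume f: "f \<in> {f \<in> CK. supnorm f \<le> 1}"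
      have "norm (f s) \<le> 1" using sup_ge[OF K, of f s] f by auto
      then show "norm (c * f s) \<le> N" using nc N_def pos
        by (simp add: norm_mult mult_left_le)
    qed
  next
    have "norm (c * (\<lambda>t::'a. 1::'k) s) \<le> (SUP f\<in>{f\<in>CK. supnorm f \<le> 1}. norm (c * f s))"
    proof (rule cSUP_upper[OF _ dual_bdd[OF K dual]])
      have a1: "(\<lambda>t::'a. 1::'k) \<in> CK" by (rule CK_const)
      have a2: "supnorm (\<lambda>t::'a. 1::'k) = 1" using sup_const[where c="1::'k"] by simp
      show "(\<lambda>t::'a. 1::'k) \<in> {f \<in> CK. supnorm f \<le> 1}" using a1 a2 by simp
    qed
    then show "N \<le> (SUP f\<in>{f\<in>CK. supnorm f \<le> 1}. norm (c * f s))" using nc by simp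
  qed
  have val: "c * D s = of_real (N\<^sup>2)" unfolding c_def using Dsnz by simp
  show ?thesis unfolding Dset_def c_def[symmetric] N_def[symmetric]
    using dual dn val by (simp add: power2_eq_square)
qed

lemma witness:
  assumes K: "compact (UNIV::'a::topological_space set)"
    and T: "(T::('a\<Rightarrow>'k::real_normed_field)\<Rightarrow>('a\<Rightarrow>'k)) \<in> Lip0" and T1: "lipnorm T = 1"
    and u: "u \<in> CK" and v: "v \<in> CK"
    and Ds: "norm (u s - v s) = supnorm (\<lambda>t. u t - v t)" and pos: "0 < supnorm (\<lambda>t. u t - v t)"
  shows "norm (T u s - T v s) / supnorm (\<lambda>t. u t - v t) \<le> omegaL T"
proof -
  define D where "D = (\<lambda>t. u t - v t)"
  define N where "N = supnorm D"
  define c where "c = (of_real (N\<^sup>2) / D s :: 'k)"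
  have Npos: "0 < N" using pos N_def D_def by simp
  have uv: "u \<noteq> v" using pos by (auto simp: sup_const)
  have mem: "(\<lambda>f. c * f s) \<in> Dset D"
    using point_Dset[OF K CK_diff[OF u v], of s] Ds pos unfolding c_def N_def D_def by simp
  have nc: "norm c = N" unfolding c_def using Ds pos N_def D_def by (simp add: norm_divide norm_mult power2_eq_square)
  have inS: "(u, v, \<lambda>f. c * f s) \<in> {(x, y, \<phi>). x \<in> CK \<and> y \<in> CK \<and> x \<noteq> y \<and> \<phi> \<in> Dset (\<lambda>t. x t - y t)}"
    using u v uv mem unfolding D_def by auto
  have "(\<lambda>(x, y, \<phi>). norm (\<phi> (\<lambda>t. T x t - T y t)) / (supnorm (\<lambda>t. x t - y t))\<^sup>2) (u, v, \<lambda>f. c * f s)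
     \<le> omegaL T"
    unfolding omegaL_def by (rule cSUP_upper[OF inS omega_bdd[OF K T T1]])
  then have "norm (c * (T u s - T v s)) / N\<^sup>2 \<le> omegaL T" unfolding N_def D_def by simp
  moreover have "norm (c * (T u s - T v s)) / N\<^sup>2 = norm (T u s - T v s) / N"
    using nc Npos by (simp add: norm_mult power2_eq_square)
  ultimately show ?thesis unfolding N_def D_def by simp
qed



definition R :: "real \<Rightarrow> 'k::real_normed_field \<Rightarrow> 'k" where
  "R \<alpha> z = of_real (\<alpha> / max \<alpha> (norm z)) * z"

lemma R_norm: assumes "0 < \<alpha>" shows "norm (R \<alpha> z) \<le> \<alpha>"
proof -
  have "norm (R \<alpha> z) = \<alpha> / max \<alpha> (norm z) * norm z"
    using assms unfolding R_def norm_mult norm_of_real by simp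
  also have "\<dots> \<le> \<alpha>" using assms
    by (cases "norm z \<le> \<alpha>") (auto simp: max_def field_simps)
  finally show ?thesis .
qed

lemma R_id: assumes "0 < \<alpha>" "norm z \<le> \<alpha>" shows "R \<alpha> z = z"
  using assms by (simp add: R_def max_def)

lemma R_diff: assumes "0 < \<alpha>" "0 \<le> e" "norm z \<le> \<alpha> + e" shows "norm (z - R \<alpha> z) \<le> e"
proof (cases "norm z \<le> \<alpha>")
  case True then have "R \<alpha> z = z" using R_id assms by simp
  then show ?thesis using assms by simp
next
  case False
  then have nz: "norm z > 0" using assms by linarith
  have "z - R \<alpha> z = of_real (1 - \<alpha> / norm z) * z" using False
    by (simp add: R_def max_def algebra_simps)
  moreover have "0 \<le> 1 - \<alpha> / norm z" using False nz by (simp add: field_simps)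
  ultimately have "norm (z - R \<alpha> z) = (1 - \<alpha> / norm z) * norm z"
    by (simp only: norm_mult norm_of_real abs_of_nonneg)
  also have "\<dots> = norm z - \<alpha>" using nz by (simp add: field_simps)
  finally show ?thesis using assms by simp
qed

lemma R_cont: assumes "0 < \<alpha>" "continuous_on UNIV f"
  shows "continuous_on UNIV (\<lambda>t. R \<alpha> (f t))"
  unfolding R_def using assms
  by (auto intro!: continuous_intros)



lemma p0_bounds:
  fixes d :: "'a \<Rightarrow> 'k::real_normed_field"
  assumes r: "0 < r" and dt: "norm (d t) \<le> r" and ds: "norm (d s) \<le> r"
    and ab: "\<alpha> + \<beta> = r" and a0: "0 \<le> \<alpha>" and b0: "0 \<le> \<beta>"
    and na: "norm a = \<alpha>" and nb: "norm (d s - a) = \<beta>" and eta: "0 < \<eta>"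
  defines "g \<equiv> max 0 (1 - norm (d t - d s) / \<eta>)"
  defines "p0 \<equiv> of_real (\<alpha>/r) * d t + of_real g * (a - of_real (\<alpha>/r) * d s)"
  shows "norm p0 \<le> \<alpha> + \<eta> \<and> norm (d t - p0) \<le> \<beta> + \<eta>"
proof -
  define A where "A = (of_real (\<alpha>/r) :: 'k)"
  define B where "B = (of_real (\<beta>/r) :: 'k)"
  define G where "G = (of_real g :: 'k)"
  define H where "H = (of_real (1 - g) :: 'k)"
  have Ar: "\<alpha>/r \<le> 1" "0 \<le> \<alpha>/r" using ab r a0 b0 by auto
  have Br: "\<beta>/r \<le> 1" "0 \<le> \<beta>/r" using ab r a0 b0 by auto
  have BA: "B = 1 - A"
  proof -
    have "\<beta>/r = 1 - \<alpha>/r" using ab r by (simp add: field_simps)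
    then show ?thesis unfolding A_def B_def by simp
  qed
  have HG: "H = 1 - G" unfolding H_def G_def by simp
  have nA: "norm A = \<alpha>/r" unfolding A_def norm_of_real using Ar by (simp only: abs_of_nonneg)
  have nB: "norm B = \<beta>/r" unfolding B_def norm_of_real using Br by (simp only: abs_of_nonneg)
  have g1: "g \<le> 1" "0 \<le> g" unfolding g_def using eta by auto
  have nG: "norm G = g" unfolding G_def norm_of_real using g1 by simp
  have nH: "norm H = 1 - g" unfolding H_def norm_of_real using g1 by simp
  have Ads: "(\<alpha>/r) * norm (d s) \<le> \<alpha>" using Ar ds r a0 by (simp add: field_simps mult_left_mono)
  have Bds: "(\<beta>/r) * norm (d s) \<le> \<beta>" using Br ds r b0 by (simp add: field_simps mult_left_mono)
  have Adt: "(\<alpha>/r) * norm (d t) \<le> \<alpha>" using Ar dt r a0 by (simp add: field_simps mult_left_mono)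
  have Bdt: "(\<beta>/r) * norm (d t) \<le> \<beta>" using Br dt r b0 by (simp add: field_simps mult_left_mono)
  have p0A: "p0 = A * d t + G * (a - A * d s)" unfolding p0_def A_def G_def ..
  show ?thesis
  proof (cases "g = 0")
    case True
    then have G0: "G = 0" unfolding G_def by simp
    have "p0 = A * d t" unfolding p0A G0 by simp
    moreover have "d t - A * d t = B * d t" unfolding BA by (simp add: algebra_simps)
    moreover have "norm (A * d t) \<le> \<alpha>" using Adt nA by (simp add: norm_mult)
    moreover have "norm (B * d t) \<le> \<beta>" using Bdt nB by (simp add: norm_mult)
    ultimately show ?thesis using eta by simp
  next
    case False
    have gt: "norm (d t - d s) < \<eta>"
    proof (rule ccontr)
      assume "\<not> norm (d t - d s) < \<eta>"
      then have "1 - norm (d t - d s) / \<eta> \<le> 0" using eta by (simp add: field_simps)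
      then have "g = 0" unfolding g_def by simp
      then show False using False by simp
    qed
    have e1: "p0 = A * (d t - d s) + (H * (A * d s) + G * a)"
      unfolding p0A HG by (simp add: algebra_simps)
    have e2: "d t - p0 = B * (d t - d s) + (H * (B * d s) + G * (d s - a))"
      unfolding p0A HG BA by (simp add: algebra_simps)
    have "norm p0 \<le> norm (A * (d t - d s)) + (norm (H * (A * d s)) + norm (G * a))"
      unfolding e1 by (intro order_trans[OF norm_triangle_ineq] add_left_mono norm_triangle_ineq)
    also have "\<dots> = (\<alpha>/r) * norm (d t - d s) + ((1 - g) * ((\<alpha>/r) * norm (d s)) + g * \<alpha>)"
      by (simp add: norm_mult nA nH nG na)
    also have "\<dots> \<le> 1 * \<eta> + ((1 - g) * \<alpha> + g * \<alpha>)"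
      using Ar gt g1 Ads by (intro add_mono mult_mono mult_left_mono) auto
    also have "\<dots> = \<alpha> + \<eta>" by (simp add: algebra_simps)
    finally have n1: "norm p0 \<le> \<alpha> + \<eta>" .
    have "norm (d t - p0) \<le> norm (B * (d t - d s)) + (norm (H * (B * d s)) + norm (G * (d s - a)))"
      unfolding e2 by (intro order_trans[OF norm_triangle_ineq] add_left_mono norm_triangle_ineq)
    also have "\<dots> = (\<beta>/r) * norm (d t - d s) + ((1 - g) * ((\<beta>/r) * norm (d s)) + g * \<beta>)"
      by (simp add: norm_mult nB nH nG nb)
    also have "\<dots> \<le> 1 * \<eta> + ((1 - g) * \<beta> + g * \<beta>)"
      using Br gt g1 Bds by (intro add_mono mult_mono mult_left_mono) auto
    also have "\<dots> = \<beta> + \<eta>" by (simp add: algebra_simps)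
    finally have n2: "norm (d t - p0) \<le> \<beta> + \<eta>" .
    show ?thesis using n1 n2 by simp
  qed
qed



lemma decomp:
  assumes K: "compact (UNIV::'a::topological_space set)"
    and dCK: "(d::'a\<Rightarrow>'k::real_normed_field) \<in> CK" and r: "r = supnorm d" "0 < r"
    and dsr: "norm (d s) < r" and eta: "0 < \<eta>"
  shows "\<exists>p q \<rho>. p \<in> CK \<and> q \<in> CK \<and> \<rho> \<in> CK \<and> (\<forall>t. d t = \<rho> t + q t + p t)
     \<and> norm (p s) = supnorm p \<and> norm (q s) = supnorm q \<and> 0 < supnorm p \<and> 0 < supnorm q
     \<and> supnorm p + supnorm q = r \<and> supnorm \<rho> \<le> 2 * \<eta>"
proof -
  define \<alpha> where "\<alpha> = (r + norm (d s)) / 2"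
  define \<beta> where "\<beta> = (r - norm (d s)) / 2"
  have ab: "\<alpha> + \<beta> = r" unfolding \<alpha>_def \<beta>_def by (simp add: field_simps)
  have a0: "0 < \<alpha>" using r(2) norm_ge_zero[of "d s"] unfolding \<alpha>_def by (simp add: add_pos_nonneg)
  have b0: "0 < \<beta>" using dsr unfolding \<beta>_def by simp
  define a where "a = (if d s = 0 then of_real \<alpha> else of_real (\<alpha> / norm (d s)) * d s :: 'k)"
  have na: "norm a = \<alpha>" "norm (d s - a) = \<beta>"
  proof -
    show "norm a = \<alpha>"
    proof (cases "d s = 0")
      case True then show ?thesis using a0 unfolding a_def by simp
    next
      case False
      then have "norm a = \<bar>\<alpha> / norm (d s)\<bar> * norm (d s)" unfolding a_def by (simp only: if_False norm_mult norm_of_real)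
      then show ?thesis using False a0 by simp
    qed
    show "norm (d s - a) = \<beta>"
    proof (cases "d s = 0")
      case True then show ?thesis unfolding a_def \<alpha>_def \<beta>_def using r(2) by simp
    next
      case False
      then have nz: "0 < norm (d s)" by simp
      have "d s - a = of_real (1 - \<alpha> / norm (d s)) * d s" using False unfolding a_def
        by (simp add: algebra_simps)
      moreover have "1 - \<alpha> / norm (d s) \<le> 0" using nz dsr unfolding \<alpha>_def by (simp add: field_simps)
      ultimately have "norm (d s - a) = (\<alpha> / norm (d s) - 1) * norm (d s)"
        by (simp only: norm_mult norm_of_real) simp
      also have "\<dots> = \<beta>" using nz unfolding \<alpha>_def \<beta>_def by (simp add: field_simps)
      finally show ?thesis .
    qed
  qed
  have dt: "\<And>t. norm (d t) \<le> r" using sup_ge[OF K dCK] r by simp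
  define g where "g = (\<lambda>t. max 0 (1 - norm (d t - d s) / \<eta>))"
  define p0 where "p0 = (\<lambda>t. of_real (\<alpha>/r) * d t + of_real (g t) * (a - of_real (\<alpha>/r) * d s))"
  have pb: "\<And>t. norm (p0 t) \<le> \<alpha> + \<eta> \<and> norm (d t - p0 t) \<le> \<beta> + \<eta>"
  proof -
    fix t
    show "norm (p0 t) \<le> \<alpha> + \<eta> \<and> norm (d t - p0 t) \<le> \<beta> + \<eta>"
    unfolding p0_def g_def
    by (rule p0_bounds[where d=d and t=t and s=s and a=a and \<eta>=\<eta> and r=r and \<alpha>=\<alpha> and \<beta>=\<beta>])
       (use r(2) dt ab a0 b0 na eta in auto)
  qed
  have p0s: "p0 s = a" unfolding p0_def g_def by simp
  define p where "p = (\<lambda>t. R \<alpha> (p0 t))"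
  define e where "e = (\<lambda>t. d t - p t)"
  define q where "q = (\<lambda>t. R \<beta> (e t))"
  define \<rho> where "\<rho> = (\<lambda>t. e t - q t)"
  have p0c: "continuous_on UNIV p0" using dCK r(2) eta unfolding p0_def g_def CK_def
    by (auto intro!: continuous_intros)
  have pCK: "p \<in> CK" unfolding p_def CK_def using R_cont[OF a0 p0c] by simp
  have eCK: "e \<in> CK" unfolding e_def using CK_diff[OF dCK pCK] .
  have qCK: "q \<in> CK" unfolding q_def CK_def using R_cont[OF b0] eCK unfolding CK_def by simp
  have rCK: "\<rho> \<in> CK" unfolding \<rho>_def using CK_diff[OF eCK qCK] .
  have pn: "\<And>t. norm (p t) \<le> \<alpha>" unfolding p_def using R_norm[OF a0] .
  have qn: "\<And>t. norm (q t) \<le> \<beta>" unfolding q_def using R_norm[OF b0] .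
  have pd: "\<And>t. norm (p0 t - p t) \<le> \<eta>"
  proof -
    fix t show "norm (p0 t - p t) \<le> \<eta>" unfolding p_def using R_diff[OF a0, of \<eta> "p0 t"] pb[of t] eta by simp
  qed
  have en: "\<And>t. norm (e t) \<le> \<beta> + 2 * \<eta>"
  proof -
    fix t
    have "e t = (d t - p0 t) + (p0 t - p t)" unfolding e_def by simp
    then have "norm (e t) \<le> norm (d t - p0 t) + norm (p0 t - p t)" using norm_triangle_ineq by metis
    then show "norm (e t) \<le> \<beta> + 2 * \<eta>" using pb[of t] pd[of t] by simp
  qed
  have rn: "\<And>t. norm (\<rho> t) \<le> 2 * \<eta>"
  proof -
    fix t show "norm (\<rho> t) \<le> 2 * \<eta>" unfolding \<rho>_def q_def using R_diff[OF b0, of "2*\<eta>" "e t"] en[of t] eta by simp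
  qed
  have ps: "p s = a" unfolding p_def p0s using R_id[OF a0, of a] na by simp
  have qs: "q s = d s - a" unfolding q_def e_def ps using R_id[OF b0, of "d s - a"] na by simp
  have sp: "supnorm p = \<alpha>" using sup_le[of p, OF pn] sup_ge[OF K pCK, of s] ps na by simp
  have sq: "supnorm q = \<beta>" using sup_le[of q, OF qn] sup_ge[OF K qCK, of s] qs na by simp
  have sr: "supnorm \<rho> \<le> 2 * \<eta>" using sup_le[of \<rho>, OF rn] .
  have sum: "\<forall>t. d t = \<rho> t + q t + p t" unfolding \<rho>_def e_def by simp
  show ?thesis
    apply (rule exI[of _ p], rule exI[of _ q], rule exI[of _ \<rho>])
    using pCK qCK rCK sum ps qs sp sq sr na a0 b0 ab by simp
qed



lemma pairs_ne: "{(x::'a::topological_space\<Rightarrow>'k::real_normed_field, y). x \<in> CK \<and> y \<in> CK \<and> x \<noteq> y} \<noteq> {}"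
proof -
  have "((\<lambda>t::'a. 1::'k), (\<lambda>t::'a. 0::'k)) \<in> {(x, y). x \<in> CK \<and> y \<in> CK \<and> x \<noteq> y}"
    using CK_const[where c="1::'k"] CK_const[where c="0::'k"] by (auto dest: fun_cong)
  then show ?thesis by blast
qed

lemma omega_ge:
  assumes K: "compact (UNIV::'a::topological_space set)"
    and T: "(T::('a\<Rightarrow>'k::real_normed_field)\<Rightarrow>('a\<Rightarrow>'k)) \<in> Lip0" and T1: "lipnorm T = 1"
    and eps: "0 < \<epsilon>"
  shows "1 - 3 * \<epsilon> \<le> omegaL T"
proof -
  have TCK: "\<And>x. x \<in> CK \<Longrightarrow> T x \<in> CK" using T unfolding Lip0_def by auto
  have "1 - \<epsilon> < lipnorm T" using T1 eps by simp
  then obtain xy where xy: "xy \<in> {(x, y). x \<in> CK \<and> y \<in> CK \<and> x \<noteq> y}"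
     and lt: "1 - \<epsilon> < (\<lambda>(x, y). supnorm (\<lambda>t. T x t - T y t) / supnorm (\<lambda>t. x t - y t)) xy"
    unfolding lipnorm_def using less_cSUP_iff[OF pairs_ne lip_bdd[OF K T]] by blast
  obtain x y where xyd: "xy = (x, y)" "x \<in> CK" "y \<in> CK" "x \<noteq> y" using xy by auto
  define d where "d = (\<lambda>t. x t - y t)"
  define w where "w = (\<lambda>t. T x t - T y t)"
  define r where "r = supnorm d"
  have dCK: "d \<in> CK" unfolding d_def using CK_diff xyd by blast
  have wCK: "w \<in> CK" unfolding w_def using CK_diff TCK xyd by blast
  have rpos: "0 < r" unfolding r_def d_def using sup_pos[OF K xyd(2-4)] .
  have "1 - \<epsilon> < supnorm w / r" using lt xyd unfolding w_def r_def d_def by simp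
  then have "(1 - \<epsilon>) * r < supnorm w" using rpos by (simp add: field_simps)
  then obtain s where ws: "(1 - \<epsilon>) * r < norm (w s)"
    unfolding supnorm_def using less_cSUP_iff[OF _ CK_bdd[OF K wCK]] by auto
  have dsr: "norm (d s) \<le> r" unfolding r_def using sup_ge[OF K dCK] .
  show ?thesis
  proof (cases "norm (d s) = r")
    case True
    have "norm (w s) / r \<le> omegaL T"
      using witness[OF K T T1 xyd(2,3), of s] True rpos unfolding w_def r_def d_def by simp
    then have "norm (w s) \<le> omegaL T * r" using rpos by (simp add: divide_le_eq)
    then have "(1 - \<epsilon>) * r < omegaL T * r" using ws by simp
    then have "1 - \<epsilon> < omegaL T" using rpos by simp
    then show ?thesis using eps by simp
  next
    case False
    then have dsr': "norm (d s) < r" using dsr by simp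
    have "0 < \<epsilon> * r" using eps rpos by simp
    from decomp[OF K dCK r_def rpos dsr' this] obtain p q \<rho> where
      pq: "p \<in> CK" "q \<in> CK" "\<rho> \<in> CK" "\<forall>t. d t = \<rho> t + q t + p t"
       "norm (p s) = supnorm p" "norm (q s) = supnorm q" "0 < supnorm p" "0 < supnorm q"
       "supnorm p + supnorm q = r" "supnorm \<rho> \<le> 2 * (\<epsilon> * r)" by blast
    define v1 where "v1 = (\<lambda>t. y t + \<rho> t)"
    define v2 where "v2 = (\<lambda>t. v1 t + q t)"
    have v1CK: "v1 \<in> CK" unfolding v1_def using CK_add xyd pq by blast
    have v2CK: "v2 \<in> CK" unfolding v2_def using CK_add v1CK pq by blast
    have e1: "(\<lambda>t. v1 t - y t) = \<rho>" unfolding v1_def by simp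
    have e2: "(\<lambda>t. v2 t - v1 t) = q" unfolding v2_def by simp
    have e3: "(\<lambda>t. x t - v2 t) = p" using pq(4) unfolding v2_def v1_def d_def
      by (auto simp: algebra_simps fun_eq_iff)
    define \<Omega> where "\<Omega> = omegaL T"
    have b1: "norm (T v1 s - T y s) \<le> 2 * (\<epsilon> * r)"
    proof -
      have "norm (T v1 s - T y s) \<le> supnorm (\<lambda>t. T v1 t - T y t)"
        using sup_ge[OF K CK_diff[OF TCK[OF v1CK] TCK[OF xyd(3)]]] by simp
      also have "\<dots> \<le> supnorm (\<lambda>t. v1 t - y t)" using lip_le[OF K T v1CK xyd(3)] T1 by simp
      finally show ?thesis using e1 pq(10) by simp
    qed
    have b2: "norm (T v2 s - T v1 s) \<le> \<Omega> * supnorm q"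
      using witness[OF K T T1 v2CK v1CK, of s] e2 fun_cong[OF e2, of s] pq(6,8) unfolding \<Omega>_def
      by (simp add: divide_le_eq)
    have b3: "norm (T x s - T v2 s) \<le> \<Omega> * supnorm p"
      using witness[OF K T T1 xyd(2) v2CK, of s] e3 fun_cong[OF e3, of s] pq(5,7) unfolding \<Omega>_def
      by (simp add: divide_le_eq)
    have "w s = (T v1 s - T y s) + (T v2 s - T v1 s) + (T x s - T v2 s)" unfolding w_def by simp
    then have "norm (w s) \<le> norm (T v1 s - T y s) + norm (T v2 s - T v1 s) + norm (T x s - T v2 s)"
      by (simp only: ) (rule order_trans[OF norm_triangle_ineq add_right_mono[OF norm_triangle_ineq]])
    also have "\<dots> \<le> 2 * (\<epsilon> * r) + \<Omega> * supnorm q + \<Omega> * supnorm p" using b1 b2 b3 by linarith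
    also have "\<dots> = 2 * (\<epsilon> * r) + \<Omega> * r" using pq(9) by (simp add: distrib_left[symmetric] add.commute)
    finally have "(1 - \<epsilon>) * r < 2 * (\<epsilon> * r) + \<Omega> * r" using ws by linarith
    then have "(1 - 3 * \<epsilon>) * r < \<Omega> * r" by (simp add: algebra_simps)
    then show ?thesis using rpos unfolding \<Omega>_def by simp
  qed
qed



lemma omega_ne:
  assumes K: "compact (UNIV::'a::topological_space set)"
  shows "{(x::'a\<Rightarrow>'k::real_normed_field, y, \<phi>). x \<in> CK \<and> y \<in> CK \<and> x \<noteq> y \<and> \<phi> \<in> Dset (\<lambda>t. x t - y t)} \<noteq> {}"
proof -
  define x where "x = (\<lambda>t::'a. 1::'k)"
  define y where "y = (\<lambda>t::'a. 0::'k)"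
  have x: "x \<in> CK" "y \<in> CK" unfolding x_def y_def by (rule CK_const)+
  have xy: "x \<noteq> y" unfolding x_def y_def by (auto dest: fun_cong)
  define D where "D = (\<lambda>t. x t - y t)"
  have D1: "\<And>t. D t = 1" unfolding D_def x_def y_def by simp
  have DCK: "D \<in> CK" unfolding D_def by (rule CK_diff[OF x])
  have s1: "supnorm D = 1" unfolding supnorm_def D1 by simp
  have "(\<lambda>f. (of_real ((supnorm D)\<^sup>2) / D undefined) * f undefined) \<in> Dset D"
    by (rule point_Dset[OF K DCK]) (simp_all add: s1 D1)
  then have "(x, y, (\<lambda>f. (of_real ((supnorm D)\<^sup>2) / D undefined) * f undefined))
       \<in> {(x, y, \<phi>). x \<in> CK \<and> y \<in> CK \<and> x \<noteq> y \<and> \<phi> \<in> Dset (\<lambda>t. x t - y t)}"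
    unfolding D_def using x xy by blast
  then show ?thesis by blast
qed

lemma omega_eq:
  assumes K: "compact (UNIV::'a::topological_space set)"
    and T: "(T::('a\<Rightarrow>'k::real_normed_field)\<Rightarrow>('a\<Rightarrow>'k)) \<in> Lip0" and T1: "lipnorm T = 1"
  shows "omegaL T = 1"
proof (rule antisym)
  show "omegaL T \<le> 1" unfolding omegaL_def
  proof (rule cSUP_least[OF omega_ne[OF K]])
    fix z :: "('a\<Rightarrow>'k) \<times> ('a\<Rightarrow>'k) \<times> (('a\<Rightarrow>'k)\<Rightarrow>'k)"
    assume "z \<in> {(x, y, \<phi>). x \<in> CK \<and> y \<in> CK \<and> x \<noteq> y \<and> \<phi> \<in> Dset (\<lambda>t. x t - y t)}"
    then obtain x y \<phi> where "z = (x, y, \<phi>)" "x \<in> CK" "y \<in> CK" "x \<noteq> y" "\<phi> \<in> Dset (\<lambda>t. x t - y t)" by auto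
    then show "(case z of (x, y, \<phi>) \<Rightarrow> norm (\<phi> (\<lambda>t. T x t - T y t)) / (supnorm (\<lambda>t. x t - y t))\<^sup>2) \<le> 1"
      using omega_elem_le[OF K T T1] by simp
  qed
next
  show "1 \<le> omegaL T"
  proof (rule field_le_epsilon)
    fix e :: real assume e: "0 < e"
    have "1 - 3 * (e/3) \<le> omegaL T" using omega_ge[OF K T T1, of "e/3"] e by simp
    then show "1 \<le> omegaL T + e" by simp
  qed
qed

lemma id_Lip0: "(id :: ('a::topological_space\<Rightarrow>'k::real_normed_field)\<Rightarrow>_) \<in> Lip0"
  unfolding Lip0_def by (intro CollectI conjI ballI exI[of _ 1]) simp_all

lemma id_lip:
  assumes K: "compact (UNIV::'a::topological_space set)"
  shows "lipnorm (id :: ('a\<Rightarrow>'k::real_normed_field)\<Rightarrow>_) = 1"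
proof -
  have "lipnorm (id :: ('a\<Rightarrow>'k)\<Rightarrow>_) = (SUP xy\<in>{(x::'a\<Rightarrow>'k, y). x \<in> CK \<and> y \<in> CK \<and> x \<noteq> y}. 1)"
    unfolding lipnorm_def
  proof (rule SUP_cong[OF refl])
    fix xy assume "xy \<in> {(x::'a\<Rightarrow>'k, y). x \<in> CK \<and> y \<in> CK \<and> x \<noteq> y}"
    then obtain x y where "xy = (x,y)" "x \<in> CK" "y \<in> CK" "x \<noteq> y" by auto
    then show "(case xy of (x, y) \<Rightarrow> supnorm (\<lambda>t. id x t - id y t) / supnorm (\<lambda>t. x t - y t)) = 1"
      using sup_pos[OF K, of x y] by simp
  qed
  also have "\<dots> = 1" by (rule cSUP_const[OF pairs_ne])
  finally show ?thesis .
qed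

lemma nL_one:
  assumes K: "compact (UNIV::'a::topological_space set)"
  shows "nL TYPE('a \<Rightarrow> 'k::real_normed_field) = 1"
proof -
  have "{omegaL T | T :: ('a \<Rightarrow> 'k) \<Rightarrow> ('a \<Rightarrow> 'k). T \<in> Lip0 \<and> lipnorm T = 1} = {1}"
  proof
    show "{omegaL T | T :: ('a \<Rightarrow> 'k) \<Rightarrow> ('a \<Rightarrow> 'k). T \<in> Lip0 \<and> lipnorm T = 1} \<subseteq> {1}"
      using omega_eq[OF K] by auto
    show "{1} \<subseteq> {omegaL T | T :: ('a \<Rightarrow> 'k) \<Rightarrow> ('a \<Rightarrow> 'k). T \<in> Lip0 \<and> lipnorm T = 1}"
    proof -
      have "omegaL (id :: ('a \<Rightarrow> 'k) \<Rightarrow> ('a \<Rightarrow> 'k)) = 1" by (rule omega_eq[OF K id_Lip0 id_lip[OF K]])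
      then have "\<exists>T :: ('a \<Rightarrow> 'k) \<Rightarrow> ('a \<Rightarrow> 'k). 1 = omegaL T \<and> T \<in> Lip0 \<and> lipnorm T = 1"
        using id_Lip0 id_lip[OF K] by metis
      then show ?thesis by simp
    qed
  qed
  then show ?thesis unfolding nL_def by simp
qed

theorem proposition2p8:
  assumes "compact (UNIV :: 'a::t2_space set)"
  shows "nL TYPE('a \<Rightarrow> real) = 1 \<and> nL TYPE('a \<Rightarrow> complex) = 1"
  using nL_one[OF assms, where 'k=real] nL_one[OF assms, where 'k=complex] by simp

end
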